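(* Let $\Gamma=(V,E)$ be a finite simple graph with $V=\{1,\dots,n\}$ and let $A_\Gamma^+$ be the associated right-angled Artin monoid. Let $F\subset A_\Gamma^+$ be a finite subset such that $\vee F\neq\infty$, i.e. $\bigcap_{x\in F} xA_\Gamma^+\neq\emptyset$. Suppose $I\in V$ is an initial vertex of some $x\in F$. Then for each $y\in F$, either $I$ is an initial vertex of $y$, or $I$ is adjacent in $\Gamma$ to every vertex $I(y_j)$ of every syllable $y_j$ of $y$.
   Context: The right-angled Artin monoid is $A_\Gamma^+=\langle e_1,\dots,e_n : e_ie_j=e_je_i \text{ whenever } ij\in E\rangle$, with identity $1$. Every $x\neq 1$ can be written $x=x_1x_2\cdots x_m$ with syllables $x_j=e_{i_j}^{a_j}$, $a_j\ge 1$; the vertex of the syllable $x_j$ is $I(x_j)=i_j$. A shuffle of such an expression swaps two adjacent syllables $x_j,x_{j+1}$ whose vertices are adjacent in $\Gamma$; an amalgamation merges two consecutive syllables with the same vertex into one. An expression is reduced if no sequence of shuffles produces an expression admitting an amalgamation. A vertex $i$ is an initial vertex of $x$ if some reduced expression $x=x_1\cdots x_m$ has $x_1=e_i^{a_1}$ with $a_1\ge1$. For a finite $F\subset A_\Gamma^+$, one writes $\vee F=\infty$ if $\bigcap_{x\in F}xA_\Gamma^+=\emptyset$; otherwise this intersection equals $rA_\Gamma^+$ for a unique $r$, and $\vee F=r$. *)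

theory Defs
  imports Main
begin

definition simple_graph :: "nat \<Rightarrow> (nat \<Rightarrow> nat \<Rightarrow> bool) \<Rightarrow> bool" where
  "simple_graph n E \<longleftrightarrow> (\<forall>i j. E i j \<longrightarrow> E j i) \<and> (\<forall>i. \<not> E i i)
     \<and> (\<forall>i j. E i j \<longrightarrow> i \<in> {1..n} \<and> j \<in> {1..n})"

text \<open>Words over the generators e_1..e_n; the monoid A_Gamma^+ is the set of such
words modulo the congruence generated by e_i e_j = e_j e_i for ij in E.\<close>
definition word :: "nat \<Rightarrow> nat list \<Rightarrow> bool" where
  "word n w \<longleftrightarrow> set w \<subseteq> {1..n}"

definition comm_step :: "(nat \<Rightarrow> nat \<Rightarrow> bool) \<Rightarrow> nat list \<Rightarrow> nat list \<Rightarrow> bool" where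
  "comm_step E u v \<longleftrightarrow> (\<exists>p q i j. E i j \<and> u = p @ [i, j] @ q \<and> v = p @ [j, i] @ q)"

definition raam_eq :: "(nat \<Rightarrow> nat \<Rightarrow> bool) \<Rightarrow> nat list \<Rightarrow> nat list \<Rightarrow> bool" where
  "raam_eq E = equivclp (comm_step E)"

definition right_ideal :: "nat \<Rightarrow> (nat \<Rightarrow> nat \<Rightarrow> bool) \<Rightarrow> nat list \<Rightarrow> nat list set" where
  "right_ideal n E x = {w. word n w \<and> (\<exists>z. word n z \<and> raam_eq E w (x @ z))}"

definition join_finite :: "nat \<Rightarrow> (nat \<Rightarrow> nat \<Rightarrow> bool) \<Rightarrow> nat list set \<Rightarrow> bool" where
  "join_finite n E F \<longleftrightarrow> (\<Inter>x\<in>F. right_ideal n E x) \<noteq> {}"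

text \<open>Syllable expressions: lists of syllables (vertex, exponent) meaning e_i^a.\<close>
type_synonym syll_expr = "(nat \<times> nat) list"

definition eval_expr :: "syll_expr \<Rightarrow> nat list" where
  "eval_expr s = concat (map (\<lambda>(i, a). replicate a i) s)"

definition is_expr :: "nat \<Rightarrow> (nat \<Rightarrow> nat \<Rightarrow> bool) \<Rightarrow> nat list \<Rightarrow> syll_expr \<Rightarrow> bool" where
  "is_expr n E x s \<longleftrightarrow> (\<forall>(i, a) \<in> set s. i \<in> {1..n} \<and> a \<ge> 1) \<and> raam_eq E (eval_expr s) x"

definition shuffle :: "(nat \<Rightarrow> nat \<Rightarrow> bool) \<Rightarrow> syll_expr \<Rightarrow> syll_expr \<Rightarrow> bool" where
  "shuffle E s t \<longleftrightarrow> (\<exists>p q i a j b. E i j \<and> s = p @ [(i, a), (j, b)] @ q \<and> t = p @ [(j, b), (i, a)] @ q)"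

definition admits_amalgamation :: "syll_expr \<Rightarrow> bool" where
  "admits_amalgamation s \<longleftrightarrow> (\<exists>p q i a b. s = p @ [(i, a), (i, b)] @ q)"

definition reduced :: "(nat \<Rightarrow> nat \<Rightarrow> bool) \<Rightarrow> syll_expr \<Rightarrow> bool" where
  "reduced E s \<longleftrightarrow> (\<forall>t. (shuffle E)\<^sup>*\<^sup>* s t \<longrightarrow> \<not> admits_amalgamation t)"

definition initial_vertex :: "nat \<Rightarrow> (nat \<Rightarrow> nat \<Rightarrow> bool) \<Rightarrow> nat \<Rightarrow> nat list \<Rightarrow> bool" where
  "initial_vertex n E i x \<longleftrightarrow>
     (\<exists>s. is_expr n E x s \<and> reduced E s \<and> s \<noteq> [] \<and> fst (hd s) = i \<and> snd (hd s) \<ge> 1)"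

end

theory Submission
  imports Defs
begin

lemma comm_step_sym:
  assumes "simple_graph n E" "comm_step E u v" shows "comm_step E v u"
  using assms unfolding simple_graph_def comm_step_def by blast

lemma comm_step_set: "comm_step E u v \<Longrightarrow> set u = set v"
  unfolding comm_step_def by auto

lemma raam_eq_set: "raam_eq E u v \<Longrightarrow> set u = set v"
  unfolding raam_eq_def
  by (induction rule: equivclp_induct) (auto dest: comm_step_set)

lemma comm_step_ctx: "comm_step E u v \<Longrightarrow> comm_step E (l @ u @ r) (l @ v @ r)"
  unfolding comm_step_def
  by (clarify, rule_tac x="l @ p" in exI, rule_tac x="q @ r" in exI, auto)

lemma raam_eq_ctx: "raam_eq E u v \<Longrightarrow> raam_eq E (l @ u @ r) (l @ v @ r)"
  unfolding raam_eq_def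
proof (induction rule: equivclp_induct)
  case base
  then show ?case by simp
next
  case (step y z)
  then show ?case
    by (meson comm_step_ctx equivclp_into_equivclp)
qed

lemma raam_eq_trans: "raam_eq E a b \<Longrightarrow> raam_eq E b c \<Longrightarrow> raam_eq E a c"
  unfolding raam_eq_def by (rule equivclp_trans)

lemma raam_eq_sym: "raam_eq E a b \<Longrightarrow> raam_eq E b a"
  unfolding raam_eq_def by (rule equivclp_sym)

lemma raam_eq_refl: "raam_eq E a a"
  unfolding raam_eq_def by simp

lemma raam_eq_step: "comm_step E a b \<Longrightarrow> raam_eq E a b"
  unfolding raam_eq_def by blast

lemma raam_eq_append_r: "raam_eq E u v \<Longrightarrow> raam_eq E (u @ r) (v @ r)"
  using raam_eq_ctx[of E u v "[]" r] by simp

lemma raam_eq_Cons: "raam_eq E u v \<Longrightarrow> raam_eq E (a # u) (a # v)"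
  using raam_eq_ctx[of E u v "[a]" "[]"] by simp

lemma tw_first: "a \<notin> set p \<Longrightarrow> takeWhile (\<lambda>c. c \<noteq> a) (p @ a # q) = p"
  by (induction p) auto

definition Pm :: "(nat \<Rightarrow> nat \<Rightarrow> bool) \<Rightarrow> nat \<Rightarrow> nat list \<Rightarrow> bool" where
  "Pm E a w \<longleftrightarrow> a \<in> set w \<and> (\<forall>j\<in>set (takeWhile (\<lambda>c. c \<noteq> a) w). E a j)"

lemma Pm_step:
  assumes g: "simple_graph n E" and c: "comm_step E u v" and P: "Pm E a u"
  shows "Pm E a v"
proof -
  obtain p q i j where ij: "E i j" and u: "u = p @ [i, j] @ q" and v: "v = p @ [j, i] @ q"
    using c unfolding comm_step_def by blast
  have ne: "i \<noteq> j" using g ij unfolding simple_graph_def by blast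
  have ji: "E j i" using g ij unfolding simple_graph_def by blast
  show ?thesis
  proof (cases "a \<in> set p")
    case True
    then show ?thesis using P unfolding Pm_def u v
      by (auto simp: takeWhile_append1)
  next
    case False
    then have tw: "takeWhile (\<lambda>c. c \<noteq> a) (p @ r) = p @ takeWhile (\<lambda>c. c \<noteq> a) r" for r
      by (intro takeWhile_append2) auto
    show ?thesis using P ij ji ne unfolding Pm_def u v tw
      by (cases "i = a"; cases "j = a") auto
  qed
qed

lemma Pm_inv:
  assumes g: "simple_graph n E" and r: "raam_eq E u v" and P: "Pm E a u"
  shows "Pm E a v"
  using r P unfolding raam_eq_def
  by (induction rule: equivclp_induct) (auto intro: Pm_step[OF g] comm_step_sym[OF g])

lemma move_front:
  assumes "\<forall>j\<in>set p. E j a"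
  shows "raam_eq E (p @ a # q) (a # p @ q)"
  using assms
proof (induction p)
  case Nil
  then show ?case by (simp add: raam_eq_refl)
next
  case (Cons x p)
  have 1: "raam_eq E (x # p @ a # q) (x # a # p @ q)"
    using Cons by (auto intro: raam_eq_Cons)
  have "comm_step E ([] @ [x, a] @ (p @ q)) ([] @ [a, x] @ (p @ q))"
    unfolding comm_step_def using Cons.prems by fastforce
  then have 2: "raam_eq E (x # a # p @ q) (a # x # p @ q)"
    by (auto dest: raam_eq_step)
  show ?case using raam_eq_trans[OF 1 2] by simp
qed

lemma Pm_front:
  assumes g: "simple_graph n E" and P: "Pm E a w"
  shows "\<exists>w'. raam_eq E w (a # w')"
proof -
  have "a \<in> set w" using P unfolding Pm_def by simp
  then obtain p q where w: "w = p @ a # q" and na: "a \<notin> set p"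
    by (meson split_list_first)
  have "takeWhile (\<lambda>c. c \<noteq> a) w = p"
    unfolding w using na by (induction p) auto
  then have "\<forall>j\<in>set p. E a j" using P unfolding Pm_def by simp
  then have "\<forall>j\<in>set p. E j a" using g unfolding simple_graph_def by blast
  then show ?thesis using move_front w by blast
qed

lemma eval_append[simp]: "eval_expr (s @ t) = eval_expr s @ eval_expr t"
  unfolding eval_expr_def by simp

lemma eval_Cons[simp]: "eval_expr ((i, a) # s) = replicate a i @ eval_expr s"
  unfolding eval_expr_def by simp

lemma eval_Nil[simp]: "eval_expr [] = []"
  unfolding eval_expr_def by simp

lemma set_eval: "set (eval_expr s) = {j. \<exists>a. (j, a) \<in> set s \<and> a > 0}"
  by (induction s) auto

lemma eval_mem: "(j, a) \<in> set s \<Longrightarrow> a \<ge> 1 \<Longrightarrow> j \<in> set (eval_expr s)"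
  unfolding set_eval by auto

lemma eval_mem2: "c \<in> set (eval_expr s) \<Longrightarrow> \<exists>a. (c, a) \<in> set s"
  unfolding set_eval by auto

lemma comm_one: "E i j \<Longrightarrow> raam_eq E (i # replicate b j) (replicate b j @ [i])"
proof (induction b)
  case 0
  then show ?case by (simp add: raam_eq_refl)
next
  case (Suc b)
  have "comm_step E ([] @ [i, j] @ replicate b j) ([] @ [j, i] @ replicate b j)"
    unfolding comm_step_def using Suc.prems by blast
  then have 1: "raam_eq E (i # j # replicate b j) (j # i # replicate b j)"
    by (auto dest: raam_eq_step)
  have 2: "raam_eq E (j # i # replicate b j) (j # replicate b j @ [i])"
    using Suc by (auto intro: raam_eq_Cons)
  show ?case using raam_eq_trans[OF 1 2] by simp
qed

lemma comm_block: "E i j \<Longrightarrow> raam_eq E (replicate a i @ replicate b j) (replicate b j @ replicate a i)"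
proof (induction a)
  case 0
  then show ?case by (simp add: raam_eq_refl)
next
  case (Suc a)
  have 1: "raam_eq E (i # (replicate a i @ replicate b j)) (i # (replicate b j @ replicate a i))"
    using Suc by (auto intro: raam_eq_Cons)
  have 2: "raam_eq E ((i # replicate b j) @ replicate a i) ((replicate b j @ [i]) @ replicate a i)"
    using comm_one[of E i j b, OF Suc.prems] by (rule raam_eq_append_r)
  show ?case using raam_eq_trans[OF 1 2[simplified]] by (simp add: replicate_app_Cons_same)
qed

lemma shuffle_eval: "shuffle E s t \<Longrightarrow> raam_eq E (eval_expr s) (eval_expr t)"
  unfolding shuffle_def
proof (elim exE conjE)
  fix p q i a j b assume "E i j" "s = p @ [(i, a), (j, b)] @ q" "t = p @ [(j, b), (i, a)] @ q"
  then show ?thesis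
    using raam_eq_ctx[OF comm_block[of E i j a b], of "eval_expr p" "eval_expr q"] by simp
qed

lemma shuffles_eval: "(shuffle E)\<^sup>*\<^sup>* s t \<Longrightarrow> raam_eq E (eval_expr s) (eval_expr t)"
  by (induction rule: rtranclp_induct) (auto intro: raam_eq_refl raam_eq_trans shuffle_eval)

lemma shuffle_set: "shuffle E s t \<Longrightarrow> set s = set t \<and> length s = length t"
  unfolding shuffle_def by auto

lemma shuffles_set: "(shuffle E)\<^sup>*\<^sup>* s t \<Longrightarrow> set s = set t \<and> length s = length t"
  by (induction rule: rtranclp_induct) (auto dest: shuffle_set)

lemma shuffle_Cons: "shuffle E s t \<Longrightarrow> shuffle E (x # s) (x # t)"
  unfolding shuffle_def
  by (clarify, rule_tac x="x # p" in exI, auto)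

lemma shuffles_Cons: "(shuffle E)\<^sup>*\<^sup>* s t \<Longrightarrow> (shuffle E)\<^sup>*\<^sup>* (x # s) (x # t)"
  by (induction rule: rtranclp_induct) (auto intro: rtranclp.rtrancl_into_rtrancl shuffle_Cons)

lemma shuffle_front:
  assumes "\<forall>(j, a)\<in>set p. E j I"
  shows "(shuffle E)\<^sup>*\<^sup>* (p @ (I, c) # q) ((I, c) # p @ q)"
  using assms
proof (induction p)
  case Nil
  then show ?case by simp
next
  case (Cons x p)
  obtain j a where x: "x = (j, a)" by fastforce
  have 1: "(shuffle E)\<^sup>*\<^sup>* (x # p @ (I, c) # q) (x # (I, c) # p @ q)"
    using Cons by (auto intro: shuffles_Cons)
  have "shuffle E ([] @ [(j, a), (I, c)] @ (p @ q)) ([] @ [(I, c), (j, a)] @ (p @ q))"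
    unfolding shuffle_def using Cons.prems x by fastforce
  then have 2: "shuffle E (x # (I, c) # p @ q) ((I, c) # x # p @ q)" using x by simp
  show ?case using 1 2 by simp
qed

lemma shuffles_reduced: "reduced E s \<Longrightarrow> (shuffle E)\<^sup>*\<^sup>* s t \<Longrightarrow> reduced E t"
  unfolding reduced_def by (meson rtranclp_trans)

lemma front_initial:
  assumes g: "simple_graph n E" and y: "word n y" and yI: "raam_eq E y (I # y')"
  shows "initial_vertex n E I y"
proof -
  let ?s0 = "map (\<lambda>c. (c, 1::nat)) y"
  have ev0: "eval_expr ?s0 = y" unfolding eval_expr_def by (induction y) auto
  have "is_expr n E y ?s0" using y ev0 unfolding is_expr_def word_def
    by (auto simp: raam_eq_refl)
  then obtain s where s: "is_expr n E y s" and smin: "\<forall>t. is_expr n E y t \<longrightarrow> length s \<le> length t"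
    using ex_has_least_nat[of "is_expr n E y" ?s0 length] by blast
  have red: "reduced E s"
    unfolding reduced_def
  proof (intro allI impI notI)
    fix t assume st: "(shuffle E)\<^sup>*\<^sup>* s t" and am: "admits_amalgamation t"
    then obtain p q i a b where t: "t = p @ [(i, a), (i, b)] @ q"
      unfolding admits_amalgamation_def by blast
    let ?t' = "p @ [(i, a + b)] @ q"
    have ev: "eval_expr ?t' = eval_expr t" unfolding t by (simp add: replicate_add)
    have sl: "set s = set t" "length s = length t" using shuffles_set[OF st] by auto
    have "is_expr n E y ?t'"
      unfolding is_expr_def
    proof
      show "\<forall>(i, a)\<in>set ?t'. i \<in> {1..n} \<and> 1 \<le> a"
        using s sl unfolding is_expr_def t by auto
      show "raam_eq E (eval_expr ?t') y"
        unfolding ev using s shuffles_eval[OF st] unfolding is_expr_def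
        by (meson raam_eq_sym raam_eq_trans)
    qed
    then have "length s \<le> length ?t'" using smin by blast
    then show False using sl unfolding t by simp
  qed
  have "raam_eq E (I # y') (eval_expr s)" using s yI unfolding is_expr_def
    by (meson raam_eq_sym raam_eq_trans)
  moreover have "Pm E I (I # y')" unfolding Pm_def by simp
  ultimately have P: "Pm E I (eval_expr s)" using Pm_inv[OF g] by blast
  then have "I \<in> set (eval_expr s)" unfolding Pm_def by simp
  then obtain a0 where "(I, a0) \<in> set s" using eval_mem2 by blast
  then have "\<exists>x\<in>set s. fst x = I" by force
  then obtain p xx q where sp: "s = p @ xx # q" and fx: "fst xx = I" and np: "\<forall>z\<in>set p. fst z \<noteq> I"
    using split_list_first_prop[of s "\<lambda>x. fst x = I"] by blast
  obtain c where xx: "xx = (I, c)" using fx by (cases xx) auto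
  have c1: "c \<ge> 1" using s sp xx unfolding is_expr_def by auto
  then obtain c' where cc: "c = Suc c'" by (cases c) auto
  have Inp: "I \<notin> set (eval_expr p)" using np eval_mem2 by fastforce
  have "takeWhile (\<lambda>c. c \<noteq> I) (eval_expr s) = eval_expr p"
    unfolding sp xx cc using tw_first[OF Inp] by simp
  then have Ep: "\<forall>j\<in>set (eval_expr p). E I j" using P unfolding Pm_def by simp
  have "\<forall>(j, a)\<in>set p. E j I"
  proof (clarify)
    fix j a assume ja: "(j, a) \<in> set p"
    then have "a \<ge> 1" using s sp unfolding is_expr_def by auto
    then have "j \<in> set (eval_expr p)" using eval_mem ja by blast
    then show "E j I" using Ep g unfolding simple_graph_def by blast
  qed
  then have sh: "(shuffle E)\<^sup>*\<^sup>* s ((I, c) # p @ q)"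
    using shuffle_front sp xx by metis
  have "is_expr n E y ((I, c) # p @ q)"
    unfolding is_expr_def
  proof
    show "\<forall>(i, a)\<in>set ((I, c) # p @ q). i \<in> {1..n} \<and> 1 \<le> a"
      using s shuffles_set[OF sh] unfolding is_expr_def by metis
    show "raam_eq E (eval_expr ((I, c) # p @ q)) y"
      using s shuffles_eval[OF sh] unfolding is_expr_def
      by (meson raam_eq_sym raam_eq_trans)
  qed
  moreover have "reduced E ((I, c) # p @ q)" using shuffles_reduced[OF red sh] .
  ultimately show ?thesis unfolding initial_vertex_def using c1 by fastforce
qed

theorem lemma2p2:
  fixes n :: nat and E :: "nat \<Rightarrow> nat \<Rightarrow> bool" and F :: "nat list set" and I :: nat and x :: "nat list"
  assumes "simple_graph n E"
    and "finite F" and "\<forall>w\<in>F. word n w"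
    and "join_finite n E F"
    and "x \<in> F" and "initial_vertex n E I x"
  shows "\<forall>y\<in>F. initial_vertex n E I y \<or>
           (\<forall>s. is_expr n E y s \<longrightarrow> (\<forall>(j, a) \<in> set s. E I j))"
proof
  fix y assume yF: "y \<in> F"
  note g = assms(1)
  obtain s where s: "is_expr n E x s" "s \<noteq> []" "fst (hd s) = I" "snd (hd s) \<ge> 1"
    using assms(6) unfolding initial_vertex_def by blast
  obtain b s' where sb: "s = (I, Suc b) # s'"
    using s by (cases s) (auto, metis Suc_le_D prod.collapse)
  have xI: "raam_eq E (I # (replicate b I @ eval_expr s')) x"
    using s(1) sb unfolding is_expr_def by simp
  obtain w where w: "w \<in> (\<Inter>x\<in>F. right_ideal n E x)"
    using assms(4) unfolding join_finite_def by blast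
  obtain z where z: "raam_eq E w (x @ z)" using w assms(5) unfolding right_ideal_def by blast
  obtain z' where z': "raam_eq E w (y @ z')" using w yF unfolding right_ideal_def by blast
  have "raam_eq E (I # (replicate b I @ eval_expr s') @ z) (x @ z)"
    using raam_eq_append_r[OF xI] by simp
  then have r: "raam_eq E (I # (replicate b I @ eval_expr s') @ z) (y @ z')"
    using z z' by (meson raam_eq_sym raam_eq_trans)
  have "Pm E I (I # (replicate b I @ eval_expr s') @ z)" unfolding Pm_def by simp
  then have P: "Pm E I (y @ z')" using Pm_inv[OF g r] by blast
  show "initial_vertex n E I y \<or> (\<forall>s. is_expr n E y s \<longrightarrow> (\<forall>(j, a) \<in> set s. E I j))"
  proof (cases "I \<in> set y")
    case True
    then have "Pm E I y" using P unfolding Pm_def by (simp add: takeWhile_append1)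
    then obtain y' where "raam_eq E y (I # y')" using Pm_front[OF g] by blast
    then have "initial_vertex n E I y" using front_initial[OF g] assms(3) yF by blast
    then show ?thesis by blast
  next
    case False
    then have "takeWhile (\<lambda>c. c \<noteq> I) (y @ z') = y @ takeWhile (\<lambda>c. c \<noteq> I) z'"
      by (intro takeWhile_append2) auto
    then have Ey: "\<forall>j\<in>set y. E I j" using P unfolding Pm_def by simp
    have "\<forall>(j, a) \<in> set t. E I j" if t: "is_expr n E y t" for t
    proof (clarify)
      fix j a assume ja: "(j, a) \<in> set t"
      then have "a \<ge> 1" using t unfolding is_expr_def by auto
      then have "j \<in> set (eval_expr t)" using eval_mem ja by blast
      moreover have "set (eval_expr t) = set y" using t raam_eq_set unfolding is_expr_def by blast
      ultimately show "E I j" using Ey by blast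
    qed
    then show ?thesis by blast
  qed
qed

end
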